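(* Let $L$ be a finite set of vertical lines and $R$ a finite set of horizontal closed rays in the plane such that, for every horizontal line containing a ray of $R$, the rays of $R$ on that line are exactly one leftward ray and one rightward ray, and these two rays have nonempty intersection (a closed segment, possibly a single point). Let $E$ be the set of these intersection segments (one per horizontal line carrying rays). Let $G$ be the bipartite graph with vertex classes $L$ and $E$ in which $\ell\in L$ and $e\in E$ are adjacent iff $\ell\cap e\neq\emptyset$, and let $m$ be the size of a maximum matching in $G$. Then there exists a minimum-cardinality hitting set $P$ for $L\cup R$ containing $m$ points $p_1,\dots,p_m$ together with pairwise distinct lines $\ell_1,\dots,\ell_m\in L$ and pairwise distinct segments $e_1,\dots,e_m\in E$ such that $p_i\in \ell_i\cap e_i$ for all $i$.
   Context: A hitting set for a family of subsets of the plane is a finite set of points such that every member of the family contains at least one of the points. A leftward (resp. rightward) horizontal ray is a set $\{(t,b):t\le a\}$ (resp. $\{(t,b):t\ge a\}$). *)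

theory Defs
  imports Complex_Main
begin

definition vertical_line :: "(real \<times> real) set \<Rightarrow> bool" where
  "vertical_line S \<longleftrightarrow> (\<exists>a. S = {p. fst p = a})"

definition horizontal_line :: "real \<Rightarrow> (real \<times> real) set" where
  "horizontal_line b = {p. snd p = b}"

definition leftward_ray :: "(real \<times> real) set \<Rightarrow> bool" where
  "leftward_ray S \<longleftrightarrow> (\<exists>a b. S = {(t, b) | t. t \<le> a})"

definition rightward_ray :: "(real \<times> real) set \<Rightarrow> bool" where
  "rightward_ray S \<longleftrightarrow> (\<exists>a b. S = {(t, b) | t. t \<ge> a})"

definition hitting_set :: "(real \<times> real) set set \<Rightarrow> (real \<times> real) set \<Rightarrow> bool" where
  "hitting_set F P \<longleftrightarrow> finite P \<and> (\<forall>S\<in>F. S \<inter> P \<noteq> {})"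

definition min_hitting_set :: "(real \<times> real) set set \<Rightarrow> (real \<times> real) set \<Rightarrow> bool" where
  "min_hitting_set F P \<longleftrightarrow> hitting_set F P \<and> (\<forall>Q. hitting_set F Q \<longrightarrow> card P \<le> card Q)"

definition paired_rays :: "(real \<times> real) set set \<Rightarrow> bool" where
  "paired_rays R \<longleftrightarrow> (\<forall>r\<in>R. leftward_ray r \<or> rightward_ray r) \<and>
     (\<forall>b. (\<exists>r\<in>R. r \<subseteq> horizontal_line b) \<longrightarrow>
        (\<exists>l r. {s\<in>R. s \<subseteq> horizontal_line b} = {l, r} \<and>
               leftward_ray l \<and> rightward_ray r \<and> l \<inter> r \<noteq> {}))"

definition segments :: "(real \<times> real) set set \<Rightarrow> (real \<times> real) set set" where
  "segments R = {l \<inter> r | l r. l \<in> R \<and> r \<in> R \<and> leftward_ray l \<and> rightward_ray r \<and> l \<inter> r \<noteq> {}}"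

definition is_matching :: "(real \<times> real) set set \<Rightarrow> (real \<times> real) set set
    \<Rightarrow> ((real \<times> real) set \<times> (real \<times> real) set) set \<Rightarrow> bool" where
  "is_matching L E M \<longleftrightarrow> M \<subseteq> L \<times> E \<and> (\<forall>(l, e)\<in>M. l \<inter> e \<noteq> {}) \<and>
     inj_on fst M \<and> inj_on snd M"

definition max_matching_size :: "(real \<times> real) set set \<Rightarrow> (real \<times> real) set set \<Rightarrow> nat" where
  "max_matching_size L E = Max (card ` {M. is_matching L E M})"

end

theory Submission
  imports Defs
begin


lemma successively_mono_tl:
  assumes "successively P xs"
    "\<And>x y. x \<in> set xs \<Longrightarrow> y \<in> set (tl xs) \<Longrightarrow> P x y \<Longrightarrow> Q x y"
  shows "successively Q xs"
  using assms
proof (induction xs)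
  case Nil then show ?case by simp
next
  case (Cons x xs)
  show ?case
  proof (cases xs)
    case Nil then show ?thesis by simp
  next
    case (Cons y ys)
    have "successively Q xs"
      by (rule "local.Cons.IH") (use "local.Cons.prems" \<open>xs = y # ys\<close> in auto)
    moreover have "Q x y" using "local.Cons.prems" \<open>xs = y # ys\<close> by auto
    ultimately show ?thesis using \<open>xs = y # ys\<close> by simp
  qed
qed

locale core =
  fixes L :: "'a set" and E :: "'b set" and xc :: "'a \<Rightarrow> real" and lo hi :: "'b \<Rightarrow> real"
  assumes finL: "finite L" and finE: "finite E"
begin

definition edge :: "'a \<Rightarrow> 'b \<Rightarrow> bool" where
  "edge x e \<longleftrightarrow> lo e \<le> xc x \<and> xc x \<le> hi e"

definition matching :: "('a \<times> 'b) set \<Rightarrow> bool" where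
  "matching N \<longleftrightarrow> N \<subseteq> L \<times> E \<and> (\<forall>p\<in>N. edge (fst p) (snd p)) \<and> inj_on fst N \<and> inj_on snd N"

definition step :: "('a \<times> 'b) set \<Rightarrow> 'a \<Rightarrow> 'a \<Rightarrow> bool" where
  "step N x z \<longleftrightarrow> (\<exists>e. edge x e \<and> (z, e) \<in> N)"

definition aug :: "('a \<times> 'b) set \<Rightarrow> 'a \<Rightarrow> 'b \<Rightarrow> bool" where
  "aug N z b \<longleftrightarrow> (\<exists>N'. matching N' \<and> fst ` N' = insert z (fst ` N) \<and> snd ` N' = insert b (snd ` N))"

lemma matching_finite: "matching N \<Longrightarrow> finite N"
  unfolding matching_def using finL finE by (meson finite_SigmaI finite_subset)

lemma card_fst: "matching N \<Longrightarrow> card (fst ` N) = card N"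
  unfolding matching_def by (simp add: card_image)

lemma card_snd: "matching N \<Longrightarrow> card (snd ` N) = card N"
  unfolding matching_def by (simp add: card_image)

lemma step_tl: "successively (step N) (z # xs) \<Longrightarrow> set xs \<subseteq> fst ` N"
proof (induction xs arbitrary: z)
  case Nil then show ?case by simp
next
  case (Cons y ys)
  then have "step N z y" "successively (step N) (y # ys)" by auto
  then show ?case using Cons.IH by (force simp: step_def)
qed

lemma aug_walk:
  assumes "matching N" "z \<in> L" "z \<notin> fst ` N" "successively (step N) (z # xs)"
    "distinct (z # xs)" "edge (last (z # xs)) b" "b \<in> E" "b \<notin> snd ` N"
  shows "aug N z b"
  using assms
proof (induction xs arbitrary: N z)
  case Nil
  let ?N' = "insert (z, b) N"
  have "matching ?N'" using Nil unfolding matching_def by force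
  then show ?case unfolding aug_def by (intro exI[of _ ?N']) auto
next
  case (Cons y ys)
  from Cons.prems(4) have st: "step N z y" and sy: "successively (step N) (y # ys)" by auto
  then obtain e where ze: "edge z e" and ye: "(y, e) \<in> N" by (auto simp: step_def)
  define N1 where "N1 = insert (z, e) (N - {(y, e)})"
  have yz: "y \<noteq> z" "y \<notin> set ys" "z \<notin> set ys" using Cons.prems(5) by auto
  have injf: "inj_on fst N" and injs: "inj_on snd N" and NLE: "N \<subseteq> L \<times> E"
    using Cons.prems(1) by (auto simp: matching_def)
  have fd: "fst ` (N - {(y, e)}) = fst ` N - {y}"
  proof
    show "fst ` (N - {(y, e)}) \<subseteq> fst ` N - {y}"
    proof
      fix a assume "a \<in> fst ` (N - {(y, e)})"
      then obtain c where ac: "(a, c) \<in> N" "(a, c) \<noteq> (y, e)" by force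
      have "a \<noteq> y" using ac ye injf by (metis fst_conv inj_onD)
      then show "a \<in> fst ` N - {y}" using ac by force
    qed
  next
    show "fst ` N - {y} \<subseteq> fst ` (N - {(y, e)})" by force
  qed
  have sd: "snd ` (N - {(y, e)}) = snd ` N - {e}"
  proof
    show "snd ` (N - {(y, e)}) \<subseteq> snd ` N - {e}"
    proof
      fix c assume "c \<in> snd ` (N - {(y, e)})"
      then obtain a where ac: "(a, c) \<in> N" "(a, c) \<noteq> (y, e)" by force
      have "c \<noteq> e" using ac ye injs by (metis snd_conv inj_onD)
      then show "c \<in> snd ` N - {e}" using ac by force
    qed
  next
    show "snd ` N - {e} \<subseteq> snd ` (N - {(y, e)})" by force
  qed
  have fstN1: "fst ` N1 = insert z (fst ` N - {y})" unfolding N1_def using fd by auto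
  have sndN1: "snd ` N1 = snd ` N" unfolding N1_def using sd ye by force
  have m1: "matching N1"
    unfolding matching_def
  proof (intro conjI)
    show "N1 \<subseteq> L \<times> E" unfolding N1_def using NLE ye Cons.prems(2) by auto
    show "\<forall>p\<in>N1. edge (fst p) (snd p)" unfolding N1_def using Cons.prems(1) ze
      by (auto simp: matching_def)
    show "inj_on fst N1" unfolding N1_def using fd Cons.prems(3) injf
      by (auto intro: inj_on_diff)
    show "inj_on snd N1" unfolding N1_def using sd injs
      by (auto intro: inj_on_diff)
  qed
  have yL: "y \<in> L" using ye NLE by auto
  have yN1: "y \<notin> fst ` N1" using fstN1 yz by auto
  have s1: "successively (step N1) (y # ys)"
  proof (rule successively_mono_tl[OF sy])
    fix a c assume "a \<in> set (y # ys)" "c \<in> set (tl (y # ys))" "step N a c"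
    then obtain e' where "edge a e'" "(c, e') \<in> N" "c \<noteq> y" using yz by (auto simp: step_def)
    then show "step N1 a c" unfolding step_def N1_def by auto
  qed
  have d1: "distinct (y # ys)" using Cons.prems(5) by auto
  have l1: "edge (last (y # ys)) b" using Cons.prems(6) by simp
  have b1: "b \<notin> snd ` N1" using sndN1 Cons.prems(8) by simp
  have "aug N1 y b" by (rule Cons.IH[OF m1 yL yN1 s1 d1 l1 Cons.prems(7) b1])
  then obtain N' where N': "matching N'" "fst ` N' = insert y (fst ` N1)" "snd ` N' = insert b (snd ` N1)"
    by (auto simp: aug_def)
  have "y \<in> fst ` N" using ye by force
  then have "insert y (fst ` N1) = insert z (fst ` N)" using fstN1 by auto
  then show ?case unfolding aug_def using N' sndN1 by auto
qed

lemma cover: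
  assumes "matching N" "successively (step N) (z # xs)" "edge (last (z # xs)) b"
    "min (xc z) (lo b) \<le> xc u" "xc u \<le> max (xc z) (hi b)"
  shows "\<exists>k. successively (step N) (u # drop k xs) \<and> edge (last (u # drop k xs)) b"
  using assms(2-)
proof (induction xs arbitrary: z)
  case Nil
  then have "edge u b" by (auto simp: edge_def min_def max_def split: if_splits)
  then show ?case by (intro exI[of _ 0]) auto
next
  case (Cons y ys)
  from Cons.prems(1) have sy: "successively (step N) (y # ys)" and "step N z y" by auto
  then obtain e where ze: "edge z e" and ye: "(y, e) \<in> N" by (auto simp: step_def)
  have yee: "edge y e" using assms(1) ye by (auto simp: matching_def)
  show ?case
  proof (cases "min (xc z) (xc y) \<le> xc u \<and> xc u \<le> max (xc z) (xc y)")
    case True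
    then have "edge u e" using ze yee by (auto simp: edge_def min_def max_def split: if_splits)
    then have "step N u y" using ye by (auto simp: step_def)
    then show ?thesis using sy Cons.prems(2) by (intro exI[of _ 0]) auto
  next
    case False
    have "min (xc y) (lo b) \<le> xc u" "xc u \<le> max (xc y) (hi b)"
      using False Cons.prems(3,4) by (auto simp: min_def max_def split: if_splits)
    moreover have "edge (last (y # ys)) b" using Cons.prems(2) by simp
    ultimately obtain k where "successively (step N) (u # drop k ys)" "edge (last (u # drop k ys)) b"
      using Cons.IH[OF sy] by blast
    then show ?thesis by (intro exI[of _ "Suc k"]) auto
  qed
qed

lemma aug_between:
  assumes "matching N" "successively (step N) (z # xs)" "distinct (z # xs)"
    "edge (last (z # xs)) b" "b \<in> E" "b \<notin> snd ` N"
    "u \<in> L" "u \<notin> fst ` N" "min (xc z) (lo b) \<le> xc u" "xc u \<le> max (xc z) (hi b)"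
  shows "aug N u b"
proof -
  obtain k where k: "successively (step N) (u # drop k xs)" "edge (last (u # drop k xs)) b"
    using cover[OF assms(1,2,4,9,10)] by blast
  have "set (drop k xs) \<subseteq> fst ` N" using step_tl[OF k(1)] .
  moreover have "distinct (drop k xs)" using assms(3) by simp
  ultimately have "distinct (u # drop k xs)" using assms(8) by auto
  then show ?thesis using aug_walk[OF assms(1,7,8) k(1) _ k(2) assms(5,6)] by blast
qed


lemma augmenting_exists:
  assumes mN: "matching N" and mM: "matching M" and lt: "card N < card M"
  shows "\<exists>z xs b. z \<in> L \<and> z \<notin> fst ` N \<and> successively (step N) (z # xs) \<and> distinct (z # xs)
      \<and> b \<in> E \<and> b \<notin> snd ` N \<and> edge (last (z # xs)) b"
proof (rule ccontr)
  assume H: "\<not> ?thesis"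
  define A where "A = {last (z # xs) | z xs. z \<in> L \<and> z \<notin> fst ` N \<and> successively (step N) (z # xs) \<and> distinct (z # xs)}"
  have noaug: "\<And>x b. x \<in> A \<Longrightarrow> b \<in> E \<Longrightarrow> edge x b \<Longrightarrow> b \<in> snd ` N"
    using H unfolding A_def by blast
  have NLE: "N \<subseteq> L \<times> E" "M \<subseteq> L \<times> E" using mN mM by (auto simp: matching_def)
  have AL: "A \<subseteq> L"
  proof
    fix x assume "x \<in> A"
    then obtain z xs where x: "x = last (z # xs)" "z \<in> L" "successively (step N) (z # xs)"
      unfolding A_def by blast
    have "set xs \<subseteq> L" using step_tl[OF x(3)] NLE by force
    moreover have "last (z # xs) \<in> set (z # xs)" by simp
    ultimately show "x \<in> L" using x by auto
  qed
  have free: "L - fst ` N \<subseteq> A"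
  proof
    fix z assume "z \<in> L - fst ` N"
    then show "z \<in> A" unfolding A_def by (intro CollectI exI[of _ z] exI[of _ "[]"]) auto
  qed
  have clos: "\<And>x y. x \<in> A \<Longrightarrow> step N x y \<Longrightarrow> y \<in> A"
  proof -
    fix x y assume "x \<in> A" and st: "step N x y"
    then obtain z xs where x: "x = last (z # xs)" "z \<in> L" "z \<notin> fst ` N"
      "successively (step N) (z # xs)" "distinct (z # xs)"
      unfolding A_def by blast
    have yN: "y \<in> fst ` N" using st by (force simp: step_def)
    show "y \<in> A"
    proof (cases "y \<in> set xs")
      case True
      then obtain as cs where xs: "xs = as @ y # cs" by (meson split_list)
      have "successively (step N) ((z # as @ [y]) @ cs)" using x(4) xs by simp
      then have "successively (step N) (z # as @ [y])" by (simp only: successively_append_iff)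
      moreover have "distinct (z # as @ [y])" using x(5) xs by auto
      ultimately show ?thesis unfolding A_def using x(2,3)
        by (intro CollectI exI[of _ z] exI[of _ "as @ [y]"]) auto
    next
      case False
      have "y \<noteq> z" using yN x(3) by auto
      then have d: "distinct (z # xs @ [y])" using False x(5) by auto
      have "successively (step N) ((z # xs) @ [y])"
        unfolding successively_append_iff using x(4) st x(1) by auto
      then show ?thesis unfolding A_def using x(2,3) d
        by (intro CollectI exI[of _ z] exI[of _ "xs @ [y]"]) auto
    qed
  qed
  define B where "B = {e \<in> E. \<exists>x\<in>A. edge x e}"
  have BN: "B \<subseteq> snd ` N" using noaug unfolding B_def by blast
  have finM: "finite M" and finN: "finite N" using mM mN matching_finite by auto
  have injM: "inj_on fst M" "inj_on snd M" using mM by (auto simp: matching_def)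
  have injN: "inj_on fst N" "inj_on snd N" using mN by (auto simp: matching_def)
  have Mcov: "M \<subseteq> {p\<in>M. fst p \<in> L - A} \<union> {p\<in>M. snd p \<in> B}"
  proof
    fix p assume p: "p \<in> M"
    then have "fst p \<in> L" "snd p \<in> E" "edge (fst p) (snd p)" using mM by (auto simp: matching_def)
    then show "p \<in> {p\<in>M. fst p \<in> L - A} \<union> {p\<in>M. snd p \<in> B}" using p unfolding B_def by auto
  qed
  have c1: "card {p\<in>M. fst p \<in> L - A} \<le> card (L - A)"
    by (rule card_inj_on_le[where f=fst]) (use injM finL in \<open>auto intro: inj_on_subset\<close>)
  have c2: "card {p\<in>M. snd p \<in> B} \<le> card B"
    by (rule card_inj_on_le[where f=snd]) (use injM finE in \<open>auto intro: inj_on_subset simp: B_def\<close>)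
  have "card M \<le> card ({p\<in>M. fst p \<in> L - A} \<union> {p\<in>M. snd p \<in> B})"
    by (rule card_mono) (use finM Mcov in auto)
  also have "\<dots> \<le> card {p\<in>M. fst p \<in> L - A} + card {p\<in>M. snd p \<in> B}" by (rule card_Un_le)
  finally have cM: "card M \<le> card (L - A) + card B" using c1 c2 by linarith
  have d1: "card (L - A) \<le> card {p\<in>N. fst p \<in> L - A}"
  proof -
    have "L - A \<subseteq> fst ` {p\<in>N. fst p \<in> L - A}" using free by force
    then have "card (L - A) \<le> card (fst ` {p\<in>N. fst p \<in> L - A})"
      by (rule card_mono[rotated]) (use finN in auto)
    also have "\<dots> \<le> card {p\<in>N. fst p \<in> L - A}" by (rule card_image_le) (use finN in auto)
    finally show ?thesis .
  qed
  have d2: "card B \<le> card {p\<in>N. snd p \<in> B}"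
  proof -
    have "B \<subseteq> snd ` {p\<in>N. snd p \<in> B}" using BN by force
    then have "card B \<le> card (snd ` {p\<in>N. snd p \<in> B})"
      by (rule card_mono[rotated]) (use finN in auto)
    also have "\<dots> \<le> card {p\<in>N. snd p \<in> B}" by (rule card_image_le) (use finN in auto)
    finally show ?thesis .
  qed
  have disj: "{p\<in>N. fst p \<in> L - A} \<inter> {p\<in>N. snd p \<in> B} = {}"
  proof (rule ccontr)
    assume "\<not> ?thesis"
    then obtain p where p: "p \<in> N" "fst p \<in> L - A" "snd p \<in> B" by blast
    then obtain x where "x \<in> A" "edge x (snd p)" unfolding B_def by blast
    then have "step N x (fst p)" using p(1) unfolding step_def by (intro exI[of _ "snd p"]) auto
    then have "fst p \<in> A" using clos \<open>x \<in> A\<close> by blast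
    then show False using p by blast
  qed
  have "card {p\<in>N. fst p \<in> L - A} + card {p\<in>N. snd p \<in> B}
      = card ({p\<in>N. fst p \<in> L - A} \<union> {p\<in>N. snd p \<in> B})"
    by (rule card_Un_disjoint[symmetric]) (use finN disj in auto)
  also have "\<dots> \<le> card N" by (rule card_mono) (use finN in auto)
  finally show False using cM d1 d2 lt by linarith
qed

definition valid :: "('a \<times> 'b) set \<Rightarrow> 'b set \<Rightarrow> ('b \<Rightarrow> 'a) \<Rightarrow> ('b \<Rightarrow> 'a) \<Rightarrow> bool" where
  "valid N Es uf vf \<longleftrightarrow> matching N \<and> Es \<subseteq> E \<and> uf ` Es \<subseteq> L \<and> vf ` Es \<subseteq> L \<and>
     inj_on uf Es \<and> inj_on vf Es \<and> uf ` Es \<inter> vf ` Es = {} \<and>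
     fst ` N \<inter> uf ` Es = {} \<and> fst ` N \<inter> vf ` Es = {} \<and> snd ` N \<inter> Es = {} \<and>
     (\<forall>e\<in>Es. xc (uf e) \<le> hi e \<and> lo e \<le> xc (vf e))"

lemma valid_restrict:
  assumes V: "valid N Es uf vf" and S: "Es' \<subseteq> Es"
  shows "valid N Es' uf vf"
proof -
  have a: "uf ` Es' \<subseteq> uf ` Es" "vf ` Es' \<subseteq> vf ` Es" using S by auto
  from V have v: "matching N" "Es \<subseteq> E" "uf ` Es \<subseteq> L" "vf ` Es \<subseteq> L"
     "inj_on uf Es" "inj_on vf Es" "uf ` Es \<inter> vf ` Es = {}"
     "fst ` N \<inter> uf ` Es = {}" "fst ` N \<inter> vf ` Es = {}" "snd ` N \<inter> Es = {}"
     "\<forall>e\<in>Es. xc (uf e) \<le> hi e \<and> lo e \<le> xc (vf e)" unfolding valid_def by auto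
  have "uf ` Es' \<inter> vf ` Es' = {}" using a v(7) by blast
  moreover have "fst ` N \<inter> uf ` Es' = {}" using a v(8) by blast
  moreover have "fst ` N \<inter> vf ` Es' = {}" using a v(9) by blast
  moreover have "snd ` N \<inter> Es' = {}" using S v(10) by blast
  moreover have "inj_on uf Es'" "inj_on vf Es'" using S v(5,6) inj_on_subset by blast+
  moreover have "Es' \<subseteq> E" "uf ` Es' \<subseteq> L" "vf ` Es' \<subseteq> L" using S a v(2,3,4) by blast+
  moreover have "\<forall>e\<in>Es'. xc (uf e) \<le> hi e \<and> lo e \<le> xc (vf e)" using S v(11) by blast
  ultimately show ?thesis unfolding valid_def using v(1) by blast
qed

lemma valid_update:
  assumes "valid N Es uf vf" "matching N'" "fst ` N' = insert z (fst ` N)" "snd ` N' = insert b (snd ` N)"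
    "z \<notin> uf ` Es" "z \<notin> vf ` Es" "b \<notin> Es"
  shows "valid N' Es uf vf"
  using assms unfolding valid_def by auto

lemma aug_card:
  assumes "matching N" "z \<notin> fst ` N" "matching N'" "fst ` N' = insert z (fst ` N)"
  shows "card N' = Suc (card N)"
proof -
  have "card N' = card (fst ` N')" using card_fst[OF assms(3)] by simp
  also have "\<dots> = Suc (card (fst ` N))" using assms(2,4) matching_finite[OF assms(1)] by simp
  finally show ?thesis using card_fst[OF assms(1)] by simp
qed

lemma exchange:
  assumes V: "valid N Es uf vf" and mM: "matching M" and lt: "card N < card M"
  shows "\<exists>N' Es' uf' vf'. valid N' Es' uf' vf' \<and> card N' = Suc (card N) \<and> card Es \<le> Suc (card Es')"
proof -
  have mN: "matching N" using V by (simp add: valid_def)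
  obtain z xs b where zb: "z \<in> L" "z \<notin> fst ` N" "successively (step N) (z # xs)" "distinct (z # xs)"
      "b \<in> E" "b \<notin> snd ` N" "edge (last (z # xs)) b"
    using augmenting_exists[OF mN mM lt] by blast
  have EsE: "Es \<subseteq> E" using V by (simp add: valid_def)
  have finEs: "finite Es" using finite_subset[OF EsE finE] .
  have cd: "\<And>x. card Es \<le> Suc (card (Es - {x}))" using finEs
    by (metis card_Diff1_le card_Diff_singleton_if card_Suc_Diff1 le_SucI le_refl)
  have injuf: "inj_on uf Es" and injvf: "inj_on vf Es" and duv: "uf ` Es \<inter> vf ` Es = {}"
    and dNu: "fst ` N \<inter> uf ` Es = {}" and dNv: "fst ` N \<inter> vf ` Es = {}"
    and cond: "\<forall>e\<in>Es. xc (uf e) \<le> hi e \<and> lo e \<le> xc (vf e)"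
    and ufL: "uf ` Es \<subseteq> L" and vfL: "vf ` Es \<subseteq> L"
    using V by (auto simp: valid_def)
  have "aug N z b" using aug_walk[OF mN zb(1,2,3,4,7,5,6)] .
  then obtain N' where N': "matching N'" "fst ` N' = insert z (fst ` N)" "snd ` N' = insert b (snd ` N)"
    by (auto simp: aug_def)
  have cN': "card N' = Suc (card N)" using aug_card[OF mN zb(2) N'(1,2)] .
  show ?thesis
  proof (cases "z \<in> uf ` Es")
    case True
    then obtain D where D: "D \<in> Es" "z = uf D" by blast
    show ?thesis
    proof (cases "b \<notin> Es \<or> b = D")
      case True
      have "valid N (Es - {D}) uf vf" using valid_restrict[OF V] by blast
      moreover have "z \<notin> uf ` (Es - {D})" using D injuf by (auto simp: inj_on_def)
      moreover have "z \<notin> vf ` (Es - {D})" using D duv by auto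
      moreover have "b \<notin> Es - {D}" using True by auto
      ultimately have "valid N' (Es - {D}) uf vf" using valid_update N' by blast
      then show ?thesis using cN' cd by blast
    next
      case False
      then have bEs: "b \<in> Es" "b \<noteq> D" by auto
      show ?thesis
      proof (cases "xc (uf b) \<le> hi D")
        case True
        define uf' where "uf' = uf(D := uf b)"
        have V1: "valid N (Es - {b}) uf' vf"
          unfolding valid_def
        proof (intro conjI)
          show "matching N" by (rule mN)
          show "Es - {b} \<subseteq> E" using EsE by auto
          show "uf' ` (Es - {b}) \<subseteq> L" using ufL bEs unfolding uf'_def by auto
          show "vf ` (Es - {b}) \<subseteq> L" using vfL by auto
          show "inj_on uf' (Es - {b})" using injuf bEs D unfolding uf'_def inj_on_def by auto
          show "inj_on vf (Es - {b})" using injvf by (auto intro: inj_on_subset)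
          show "uf' ` (Es - {b}) \<inter> vf ` (Es - {b}) = {}" using duv bEs unfolding uf'_def by auto
          show "fst ` N \<inter> uf' ` (Es - {b}) = {}" using dNu bEs unfolding uf'_def by auto
          show "fst ` N \<inter> vf ` (Es - {b}) = {}" using dNv by auto
          show "snd ` N \<inter> (Es - {b}) = {}" using V by (auto simp: valid_def)
          show "\<forall>e\<in>Es - {b}. xc (uf' e) \<le> hi e \<and> lo e \<le> xc (vf e)"
            using cond True unfolding uf'_def by auto
        qed
        have "z \<notin> uf' ` (Es - {b})" using D bEs injuf unfolding uf'_def inj_on_def by auto
        moreover have "z \<notin> vf ` (Es - {b})" using D duv by auto
        moreover have "b \<notin> Es - {b}" by auto
        ultimately have "valid N' (Es - {b}) uf' vf" using valid_update[OF V1 N'] by blast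
        then show ?thesis using cN' cd by blast
      next
        case False
        define u where "u = uf b"
        have uL: "u \<in> L" "u \<notin> fst ` N" using ufL dNu bEs unfolding u_def by auto
        have "xc z \<le> hi D" using cond D by auto
        then have b1: "min (xc z) (lo b) \<le> xc u" using False unfolding u_def by auto
        have b2: "xc u \<le> max (xc z) (hi b)" using cond bEs unfolding u_def by auto
        have "aug N u b" by (rule aug_between[OF mN zb(3,4,7,5,6) uL b1 b2])
        then obtain N'' where N'': "matching N''" "fst ` N'' = insert u (fst ` N)" "snd ` N'' = insert b (snd ` N)"
          by (auto simp: aug_def)
        have cN'': "card N'' = Suc (card N)" using aug_card[OF mN uL(2) N''(1,2)] .
        have "valid N (Es - {b}) uf vf" using valid_restrict[OF V] by blast
        moreover have "u \<notin> uf ` (Es - {b})" using bEs injuf unfolding u_def inj_on_def by auto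
        moreover have "u \<notin> vf ` (Es - {b})" using bEs duv unfolding u_def by auto
        moreover have "b \<notin> Es - {b}" by auto
        ultimately have "valid N'' (Es - {b}) uf vf" using valid_update N'' by blast
        then show ?thesis using cN'' cd by blast
      qed
    qed
  next
    case znu: False
    show ?thesis
    proof (cases "z \<in> vf ` Es")
      case True
      then obtain D where D: "D \<in> Es" "z = vf D" by blast
      show ?thesis
      proof (cases "b \<notin> Es \<or> b = D")
        case True
        have "valid N (Es - {D}) uf vf" using valid_restrict[OF V] by blast
        moreover have "z \<notin> vf ` (Es - {D})" using D injvf by (auto simp: inj_on_def)
        moreover have "z \<notin> uf ` (Es - {D})" using D duv by auto
        moreover have "b \<notin> Es - {D}" using True by auto
        ultimately have "valid N' (Es - {D}) uf vf" using valid_update N' by blast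
        then show ?thesis using cN' cd by blast
      next
        case False
        then have bEs: "b \<in> Es" "b \<noteq> D" by auto
        show ?thesis
        proof (cases "lo D \<le> xc (vf b)")
          case True
          define vf' where "vf' = vf(D := vf b)"
          have V1: "valid N (Es - {b}) uf vf'"
            unfolding valid_def
          proof (intro conjI)
            show "matching N" by (rule mN)
            show "Es - {b} \<subseteq> E" using EsE by auto
            show "vf' ` (Es - {b}) \<subseteq> L" using vfL bEs unfolding vf'_def by auto
            show "uf ` (Es - {b}) \<subseteq> L" using ufL by auto
            show "inj_on vf' (Es - {b})" using injvf bEs D unfolding vf'_def inj_on_def by auto
            show "inj_on uf (Es - {b})" using injuf by (auto intro: inj_on_subset)
            show "uf ` (Es - {b}) \<inter> vf' ` (Es - {b}) = {}" using duv bEs unfolding vf'_def by auto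
            show "fst ` N \<inter> vf' ` (Es - {b}) = {}" using dNv bEs unfolding vf'_def by auto
            show "fst ` N \<inter> uf ` (Es - {b}) = {}" using dNu by auto
            show "snd ` N \<inter> (Es - {b}) = {}" using V by (auto simp: valid_def)
            show "\<forall>e\<in>Es - {b}. xc (uf e) \<le> hi e \<and> lo e \<le> xc (vf' e)"
              using cond True unfolding vf'_def by auto
          qed
          have "z \<notin> vf' ` (Es - {b})" using D bEs injvf unfolding vf'_def inj_on_def by auto
          moreover have "z \<notin> uf ` (Es - {b})" using D duv by auto
          moreover have "b \<notin> Es - {b}" by auto
          ultimately have "valid N' (Es - {b}) uf vf'" using valid_update[OF V1 N'] by blast
          then show ?thesis using cN' cd by blast
        next
          case False
          define u where "u = vf b"
          have uL: "u \<in> L" "u \<notin> fst ` N" using vfL dNv bEs unfolding u_def by auto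
          have "lo D \<le> xc z" using cond D by auto
          then have b2: "xc u \<le> max (xc z) (hi b)" using False unfolding u_def by auto
          have b1: "min (xc z) (lo b) \<le> xc u" using cond bEs unfolding u_def by auto
          have "aug N u b" by (rule aug_between[OF mN zb(3,4,7,5,6) uL b1 b2])
          then obtain N'' where N'': "matching N''" "fst ` N'' = insert u (fst ` N)" "snd ` N'' = insert b (snd ` N)"
            by (auto simp: aug_def)
          have cN'': "card N'' = Suc (card N)" using aug_card[OF mN uL(2) N''(1,2)] .
          have "valid N (Es - {b}) uf vf" using valid_restrict[OF V] by blast
          moreover have "u \<notin> vf ` (Es - {b})" using bEs injvf unfolding u_def inj_on_def by auto
          moreover have "u \<notin> uf ` (Es - {b})" using bEs duv unfolding u_def by auto
          moreover have "b \<notin> Es - {b}" by auto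
          ultimately have "valid N'' (Es - {b}) uf vf" using valid_update N'' by blast
          then show ?thesis using cN'' cd by blast
        qed
      qed
    next
      case False
      have "valid N (Es - {b}) uf vf" using valid_restrict[OF V] by blast
      moreover have "b \<notin> Es - {b}" by auto
      ultimately have "valid N' (Es - {b}) uf vf" using valid_update N' znu False by blast
      then show ?thesis using cN' cd by blast
    qed
  qed
qed

lemma exchange_iter:
  assumes "valid N Es uf vf" "matching M"
  shows "\<exists>N' Es' uf' vf'. valid N' Es' uf' vf' \<and> card M \<le> card N' \<and> card N + card Es \<le> card N' + card Es'"
  using assms
proof (induction "card M - card N" arbitrary: N Es uf vf rule: less_induct)
  case less
  show ?case
  proof (cases "card M \<le> card N")
    case True then show ?thesis using less.prems by blast
  next
    case False
    then obtain N1 Es1 uf1 vf1 where 1: "valid N1 Es1 uf1 vf1" "card N1 = Suc (card N)" "card Es \<le> Suc (card Es1)"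
      using exchange[OF less.prems] by (meson not_le)
    have "card M - card N1 < card M - card N" using 1(2) False by simp
    from less.hyps[OF this 1(1) less.prems(2)] obtain N' Es' uf' vf' where
      "valid N' Es' uf' vf'" "card M \<le> card N'" "card N1 + card Es1 \<le> card N' + card Es'" by blast
    then show ?thesis using 1 by (intro exI[of _ N'] exI[of _ Es'] exI[of _ uf'] exI[of _ vf']) auto
  qed
qed

end


definition gxc :: "(real \<times> real) set \<Rightarrow> real" where
  "gxc l = (SOME a. l = {p. fst p = a})"

definition sg :: "real \<Rightarrow> real \<Rightarrow> real \<Rightarrow> (real \<times> real) set" where
  "sg a b y = {(t, y) | t. a \<le> t \<and> t \<le> b}"

definition gprm :: "(real \<times> real) set \<Rightarrow> real \<times> real \<times> real" where
  "gprm e = (SOME q. fst q \<le> fst (snd q) \<and> e = sg (fst q) (fst (snd q)) (snd (snd q)))"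

definition glo where "glo e = fst (gprm e)"
definition ghi where "ghi e = fst (snd (gprm e))"
definition ght where "ght e = snd (snd (gprm e))"

definition lray :: "(real \<times> real) set \<Rightarrow> (real \<times> real) set" where
  "lray e = {(t, ght e) | t. t \<le> ghi e}"
definition rray :: "(real \<times> real) set \<Rightarrow> (real \<times> real) set" where
  "rray e = {(t, ght e) | t. glo e \<le> t}"

lemma sg_eq:
  assumes "a \<le> b" "a' \<le> b'" "sg a b y = sg a' b' y'"
  shows "a = a' \<and> b = b' \<and> y = y'"
proof -
  have "(a, y) \<in> sg a' b' y'" "(b, y) \<in> sg a' b' y'" using assms by (auto simp: sg_def)
  moreover have "(a', y') \<in> sg a b y" "(b', y') \<in> sg a b y" using assms by (auto simp: sg_def)
  ultimately show ?thesis by (auto simp: sg_def)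
qed

lemma gprm_sg:
  assumes "a \<le> b"
  shows "glo (sg a b y) = a" "ghi (sg a b y) = b" "ght (sg a b y) = y"
proof -
  let ?P = "\<lambda>q. fst q \<le> fst (snd q) \<and> sg a b y = sg (fst q) (fst (snd q)) (snd (snd q))"
  have "?P (a, b, y)" using assms by simp
  then have "?P (gprm (sg a b y))" unfolding gprm_def by (rule someI)
  then have "gprm (sg a b y) = (a, b, y)" using sg_eq[OF assms] by (metis prod.collapse)
  then show "glo (sg a b y) = a" "ghi (sg a b y) = b" "ght (sg a b y) = y"
    by (auto simp: glo_def ghi_def ght_def)
qed

lemma not_lr: "leftward_ray S \<Longrightarrow> rightward_ray S \<Longrightarrow> False"
proof -
  assume "leftward_ray S" "rightward_ray S"
  then obtain a b a' b' where S: "S = {(t, b) | t. t \<le> a}" "S = {(t, b') | t. t \<ge> a'}"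
    unfolding leftward_ray_def rightward_ray_def by blast
  have "(min a a' - 1, b) \<in> S" using S(1) by auto
  then show False using S(2) by auto
qed

lemma lr_pair:
  assumes "leftward_ray l" "rightward_ray r" "l \<inter> r \<noteq> {}"
  shows "lray (l \<inter> r) = l" "rray (l \<inter> r) = r" "glo (l \<inter> r) \<le> ghi (l \<inter> r)"
    "l \<inter> r = sg (glo (l \<inter> r)) (ghi (l \<inter> r)) (ght (l \<inter> r))"
proof -
  obtain a b where l: "l = {(t, b) | t. t \<le> a}" using assms(1) unfolding leftward_ray_def by blast
  obtain a' b' where r: "r = {(t, b') | t. t \<ge> a'}" using assms(2) unfolding rightward_ray_def by blast
  from assms(3) obtain p where "p \<in> l" "p \<in> r" by blast
  then have bb: "b' = b" and aa: "a' \<le> a" using l r by auto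
  have lr: "l \<inter> r = sg a' a b" using l r bb unfolding sg_def by auto
  note g = gprm_sg[OF aa, of b]
  have "lray (l \<inter> r) = {(t, b) | t. t \<le> a}" unfolding lr lray_def g by simp
  then show "lray (l \<inter> r) = l" using l by simp
  have "rray (l \<inter> r) = {(t, b) | t. t \<ge> a'}" unfolding lr rray_def g by auto
  then show "rray (l \<inter> r) = r" using r bb by simp
  show "glo (l \<inter> r) \<le> ghi (l \<inter> r)" unfolding lr g by (rule aa)
  show "l \<inter> r = sg (glo (l \<inter> r)) (ghi (l \<inter> r)) (ght (l \<inter> r))" unfolding lr g ..
qed

lemma lray_snd: "p \<in> lray e \<Longrightarrow> snd p = ght e" by (auto simp: lray_def)
lemma rray_snd: "p \<in> rray e \<Longrightarrow> snd p = ght e" by (auto simp: rray_def)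
lemma lray_iff: "p \<in> lray e \<longleftrightarrow> snd p = ght e \<and> fst p \<le> ghi e" by (cases p) (auto simp: lray_def)
lemma rray_iff: "p \<in> rray e \<longleftrightarrow> snd p = ght e \<and> glo e \<le> fst p" by (cases p) (auto simp: rray_def)
lemma sg_iff: "p \<in> sg a b y \<longleftrightarrow> snd p = y \<and> a \<le> fst p \<and> fst p \<le> b" by (cases p) (auto simp: sg_def)

lemma seg_char:
  assumes "e \<in> segments R"
  shows "lray e \<in> R" "rray e \<in> R" "glo e \<le> ghi e" "e = sg (glo e) (ghi e) (ght e)"
proof -
  obtain l r where lr: "e = l \<inter> r" "l \<in> R" "r \<in> R" "leftward_ray l" "rightward_ray r" "l \<inter> r \<noteq> {}"
    using assms unfolding segments_def by blast
  note q = lr_pair[OF lr(4,5,6)]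
  show "lray e \<in> R" unfolding lr(1) q(1) by (rule lr(2))
  show "rray e \<in> R" unfolding lr(1) q(2) by (rule lr(3))
  show "glo e \<le> ghi e" unfolding lr(1) by (rule q(3))
  show "e = sg (glo e) (ghi e) (ght e)" unfolding lr(1) by (rule q(4))
qed

lemma seg_iff: "e \<in> segments R \<Longrightarrow> p \<in> e \<longleftrightarrow> snd p = ght e \<and> glo e \<le> fst p \<and> fst p \<le> ghi e"
  using seg_char(4)[of e R] sg_iff by metis

locale plane =
  fixes L R :: "(real \<times> real) set set"
  assumes finL: "finite L" and vert: "\<forall>l\<in>L. vertical_line l"
    and finR: "finite R" and pr: "paired_rays R"
begin

abbreviation SE where "SE \<equiv> segments R"

lemma line_eq: "l \<in> L \<Longrightarrow> l = {p. fst p = gxc l}"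
proof -
  assume "l \<in> L"
  then have "\<exists>a. l = {p. fst p = a}" using vert unfolding vertical_line_def by blast
  then show ?thesis unfolding gxc_def by (rule someI_ex)
qed

lemma line_iff: "l \<in> L \<Longrightarrow> p \<in> l \<longleftrightarrow> fst p = gxc l"
  using line_eq by blast

lemma line_inj: "l \<in> L \<Longrightarrow> l' \<in> L \<Longrightarrow> gxc l = gxc l' \<Longrightarrow> l = l'"
  using line_eq by metis

lemma finSE: "finite SE"
proof -
  have "SE \<subseteq> (\<lambda>(l, r). l \<inter> r) ` (R \<times> R)" unfolding segments_def by auto
  then show ?thesis using finR finite_subset by blast
qed

lemma ray_seg:
  assumes "r \<in> R"
  shows "\<exists>e\<in>SE. r = lray e \<or> r = rray e"
proof -
  have "leftward_ray r \<or> rightward_ray r" using pr assms unfolding paired_rays_def by blast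
  then obtain a b where "r = {(t, b) | t. t \<le> a} \<or> r = {(t, b) | t. t \<ge> a}"
    unfolding leftward_ray_def rightward_ray_def by blast
  then have hr: "r \<subseteq> horizontal_line b" unfolding horizontal_line_def by auto
  have ex: "\<exists>r\<in>R. r \<subseteq> horizontal_line b" using hr assms by blast
  obtain l0 r0 where lr: "{s\<in>R. s \<subseteq> horizontal_line b} = {l0, r0}" "leftward_ray l0"
    "rightward_ray r0" "l0 \<inter> r0 \<noteq> {}"
    using pr ex unfolding paired_rays_def by blast
  have "l0 \<in> {s\<in>R. s \<subseteq> horizontal_line b}" "r0 \<in> {s\<in>R. s \<subseteq> horizontal_line b}"
    using lr(1) by auto
  then have "l0 \<in> R" "r0 \<in> R" by auto
  then have e: "l0 \<inter> r0 \<in> SE" using lr(2,3,4) unfolding segments_def by blast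
  have "r \<in> {s\<in>R. s \<subseteq> horizontal_line b}" using assms hr by simp
  then have "r = l0 \<or> r = r0" unfolding lr(1) by simp
  then have "r = lray (l0 \<inter> r0) \<or> r = rray (l0 \<inter> r0)"
    using lr_pair(1,2)[OF lr(2,3,4)] by auto
  then show ?thesis using e by blast
qed

lemma seg_unique:
  assumes "e \<in> SE" "e' \<in> SE" "ght e = ght e'"
  shows "e = e'"
proof -
  obtain l r where lr: "e = l \<inter> r" "l \<in> R" "r \<in> R" "leftward_ray l" "rightward_ray r" "l \<inter> r \<noteq> {}"
    using assms unfolding segments_def by blast
  obtain l' r' where lr': "e' = l' \<inter> r'" "l' \<in> R" "r' \<in> R" "leftward_ray l'" "rightward_ray r'" "l' \<inter> r' \<noteq> {}"
    using assms unfolding segments_def by blast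
  define b where "b = ght e"
  have eq: "l = lray e" "r = rray e" "l' = lray e'" "r' = rray e'"
    using lr_pair(1,2)[OF lr(4,5,6)] lr_pair(1,2)[OF lr'(4,5,6)] unfolding lr(1) lr'(1) by simp_all
  have hs: "l \<subseteq> horizontal_line b" "r \<subseteq> horizontal_line b" "l' \<subseteq> horizontal_line b" "r' \<subseteq> horizontal_line b"
  proof -
    have "lray x \<subseteq> {p. snd p = ght x}" "rray x \<subseteq> {p. snd p = ght x}" for x
      by (auto simp: lray_def rray_def)
    then show "l \<subseteq> horizontal_line b" "r \<subseteq> horizontal_line b" "l' \<subseteq> horizontal_line b" "r' \<subseteq> horizontal_line b"
      unfolding eq horizontal_line_def b_def using assms(3) by metis+
  qed
  obtain l0 r0 where q: "{s\<in>R. s \<subseteq> horizontal_line b} = {l0, r0}" "leftward_ray l0"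
    "rightward_ray r0"
  proof -
    have ex: "\<exists>r\<in>R. r \<subseteq> horizontal_line b" using lr(2) hs(1) by blast
    have "\<forall>b. (\<exists>r\<in>R. r \<subseteq> horizontal_line b) \<longrightarrow>
        (\<exists>l r. {s\<in>R. s \<subseteq> horizontal_line b} = {l, r} \<and>
               leftward_ray l \<and> rightward_ray r \<and> l \<inter> r \<noteq> {})"
      using pr unfolding paired_rays_def by (rule conjunct2)
    then show ?thesis using ex that by blast
  qed
  have "{l, r, l', r'} \<subseteq> {s\<in>R. s \<subseteq> horizontal_line b}" using hs lr(2,3) lr'(2,3) by simp
  then have sub: "{l, r, l', r'} \<subseteq> {l0, r0}" unfolding q(1) .
  have "l = l0 \<or> l = r0" "l' = l0 \<or> l' = r0" "r = l0 \<or> r = r0" "r' = l0 \<or> r' = r0"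
    using sub by auto
  moreover have "l \<noteq> r0" using not_lr[OF lr(4)] q(3) by metis
  moreover have "l' \<noteq> r0" using not_lr[OF lr'(4)] q(3) by metis
  moreover have "r \<noteq> l0" using not_lr[OF q(2)] lr(5) by metis
  moreover have "r' \<noteq> l0" using not_lr[OF q(2)] lr'(5) by metis
  ultimately have "l = l0" "l' = l0" "r = r0" "r' = r0" by auto
  then show ?thesis using lr(1) lr'(1) by simp
qed

lemma edge_iff: "l \<in> L \<Longrightarrow> e \<in> SE \<Longrightarrow> l \<inter> e \<noteq> {} \<longleftrightarrow> glo e \<le> gxc l \<and> gxc l \<le> ghi e"
proof -
  assume l: "l \<in> L" and e: "e \<in> SE"
  show ?thesis
  proof
    assume "l \<inter> e \<noteq> {}"
    then obtain p where "p \<in> l" "p \<in> e" by blast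
    then show "glo e \<le> gxc l \<and> gxc l \<le> ghi e" using line_iff[OF l] seg_iff[OF e] by auto
  next
    assume "glo e \<le> gxc l \<and> gxc l \<le> ghi e"
    then have "(gxc l, ght e) \<in> l \<inter> e" using line_iff[OF l] seg_iff[OF e] by auto
    then show "l \<inter> e \<noteq> {}" by blast
  qed
qed

sublocale C: core L SE gxc glo ghi
  by unfold_locales (use finL finSE in auto)

lemma matching_iff: "is_matching L SE N \<longleftrightarrow> C.matching N"
proof
  assume H: "is_matching L SE N"
  then have "N \<subseteq> L \<times> SE" by (simp add: is_matching_def)
  moreover have "\<forall>p\<in>N. C.edge (fst p) (snd p)"
  proof
    fix p assume "p \<in> N"
    then have "fst p \<in> L" "snd p \<in> SE" "fst p \<inter> snd p \<noteq> {}" using H \<open>N \<subseteq> L \<times> SE\<close>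
      unfolding is_matching_def by (auto simp: case_prod_beta)
    then show "C.edge (fst p) (snd p)" using edge_iff unfolding C.edge_def by blast
  qed
  ultimately show "C.matching N" using H unfolding C.matching_def is_matching_def by blast
next
  assume H: "C.matching N"
  then have sub: "N \<subseteq> L \<times> SE" by (simp add: C.matching_def)
  have "\<forall>p\<in>N. fst p \<inter> snd p \<noteq> {}"
  proof
    fix p assume "p \<in> N"
    then have "fst p \<in> L" "snd p \<in> SE" "C.edge (fst p) (snd p)" using H sub unfolding C.matching_def by auto
    then show "fst p \<inter> snd p \<noteq> {}" using edge_iff unfolding C.edge_def by blast
  qed
  then have "\<forall>(l, e)\<in>N. l \<inter> e \<noteq> {}" by (simp add: case_prod_beta)
  then show "is_matching L SE N" using H sub unfolding C.matching_def is_matching_def by blast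
qed


lemma valid_parts:
  assumes "C.valid N Es uf vf"
  shows "N \<subseteq> L \<times> SE" "\<forall>p\<in>N. glo (snd p) \<le> gxc (fst p) \<and> gxc (fst p) \<le> ghi (snd p)"
    "inj_on fst N" "inj_on snd N" "Es \<subseteq> SE" "uf ` Es \<subseteq> L" "vf ` Es \<subseteq> L"
    "inj_on uf Es" "inj_on vf Es" "uf ` Es \<inter> vf ` Es = {}"
    "fst ` N \<inter> uf ` Es = {}" "fst ` N \<inter> vf ` Es = {}" "snd ` N \<inter> Es = {}"
    "\<forall>e\<in>Es. gxc (uf e) \<le> ghi e \<and> glo e \<le> gxc (vf e)"
proof -
  have m: "C.matching N" using assms by (simp add: C.valid_def)
  then show "N \<subseteq> L \<times> SE" "inj_on fst N" "inj_on snd N"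
    "\<forall>p\<in>N. glo (snd p) \<le> gxc (fst p) \<and> gxc (fst p) \<le> ghi (snd p)"
    by (simp_all add: C.matching_def C.edge_def)
  show "Es \<subseteq> SE" "uf ` Es \<subseteq> L" "vf ` Es \<subseteq> L"
    "inj_on uf Es" "inj_on vf Es" "uf ` Es \<inter> vf ` Es = {}"
    "fst ` N \<inter> uf ` Es = {}" "fst ` N \<inter> vf ` Es = {}" "snd ` N \<inter> Es = {}"
    "\<forall>e\<in>Es. gxc (uf e) \<le> ghi e \<and> glo e \<le> gxc (vf e)"
    using assms by (simp_all add: C.valid_def)
qed

lemma realize:
  assumes V: "C.valid N Es uf vf"
  shows "\<exists>P. hitting_set (L \<union> R) P \<and> card P + card N + card Es \<le> card L + card SE \<and>
           (\<forall>p\<in>N. (gxc (fst p), ght (snd p)) \<in> P)"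
proof -
  note v = valid_parts[OF V]
  have finN: "finite N" using v(1) finL finSE by (meson finite_SigmaI finite_subset)
  have finEs: "finite Es" using v(5) finSE finite_subset by blast
  define UL where "UL = fst ` N \<union> uf ` Es \<union> vf ` Es"
  define UE where "UE = snd ` N \<union> Es"
  define P1 where "P1 = (\<lambda>p. (gxc (fst p), ght (snd p))) ` N"
  define P2 where "P2 = (\<lambda>e. (gxc (uf e), ght e)) ` Es"
  define P3 where "P3 = (\<lambda>e. (gxc (vf e), ght e)) ` Es"
  define P4 where "P4 = (\<lambda>l. (gxc l, 0::real)) ` (L - UL)"
  define P5 where "P5 = (\<lambda>e. (glo e, ght e)) ` (SE - UE)"
  define P where "P = P1 \<union> P2 \<union> P3 \<union> P4 \<union> P5"
  have fins: "finite P1" "finite P2" "finite P3" "finite P4" "finite P5"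
    unfolding P1_def P2_def P3_def P4_def P5_def using finN finEs finL finSE by auto
  then have finP: "finite P" unfolding P_def by auto
  have ULsub: "UL \<subseteq> L" unfolding UL_def using v(1,6,7) by auto
  have UEsub: "UE \<subseteq> SE" unfolding UE_def using v(1,5) by auto
  have finUL: "finite UL" using ULsub finL finite_subset by blast
  have finUE: "finite UE" using UEsub finSE finite_subset by blast
  have cUL: "card UL = card N + card Es + card Es"
  proof -
    have d1: "fst ` N \<inter> uf ` Es = {}" by (rule v(11))
    have d2: "(fst ` N \<union> uf ` Es) \<inter> vf ` Es = {}" using v(10,12) by blast
    have "card UL = card (fst ` N \<union> uf ` Es) + card (vf ` Es)"
      unfolding UL_def by (rule card_Un_disjoint) (use finN finEs d2 in auto)
    also have "card (fst ` N \<union> uf ` Es) = card (fst ` N) + card (uf ` Es)"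
      by (rule card_Un_disjoint) (use finN finEs d1 in auto)
    finally show ?thesis using v(3,8,9) by (simp add: card_image)
  qed
  have cUE: "card UE = card N + card Es"
  proof -
    have "card UE = card (snd ` N) + card Es"
      unfolding UE_def by (rule card_Un_disjoint) (use finN finEs v(13) in auto)
    then show ?thesis using v(4) by (simp add: card_image)
  qed
  have c4: "card (L - UL) + card UL = card L"
    using card_Diff_subset[OF finUL ULsub] card_mono[OF finL ULsub] by simp
  have c5: "card (SE - UE) + card UE = card SE"
    using card_Diff_subset[OF finUE UEsub] card_mono[OF finSE UEsub] by simp
  have "card P \<le> card P1 + card P2 + card P3 + card P4 + card P5"
    unfolding P_def by (meson add_le_mono card_Un_le le_trans order_refl)
  moreover have "card P1 \<le> card N" "card P2 \<le> card Es" "card P3 \<le> card Es"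
     "card P4 \<le> card (L - UL)" "card P5 \<le> card (SE - UE)"
    unfolding P1_def P2_def P3_def P4_def P5_def by (rule card_image_le; use finN finEs finL finSE in auto)+
  ultimately have cardP: "card P + card N + card Es \<le> card L + card SE"
    using cUL cUE c4 c5 by linarith
  have hit: "\<forall>S\<in>L \<union> R. S \<inter> P \<noteq> {}"
  proof
    fix S assume S: "S \<in> L \<union> R"
    show "S \<inter> P \<noteq> {}"
    proof (cases "S \<in> L")
      case True
      have "\<exists>y. (gxc S, y) \<in> P"
      proof (cases "S \<in> UL")
        case True
        then consider (a) "S \<in> fst ` N" | (b) "S \<in> uf ` Es" | (c) "S \<in> vf ` Es" unfolding UL_def by blast
        then show ?thesis
        proof cases
          case a then obtain p where "p \<in> N" "S = fst p" by blast
          then have "(gxc S, ght (snd p)) \<in> P" unfolding P_def P1_def by blast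
          then show ?thesis by blast
        next
          case b then obtain e where "e \<in> Es" "S = uf e" by blast
          then have "(gxc S, ght e) \<in> P" unfolding P_def P2_def by blast
          then show ?thesis by blast
        next
          case c then obtain e where "e \<in> Es" "S = vf e" by blast
          then have "(gxc S, ght e) \<in> P" unfolding P_def P3_def by blast
          then show ?thesis by blast
        qed
      next
        case False
        then have "(gxc S, 0) \<in> P" unfolding P_def P4_def using \<open>S \<in> L\<close> by blast
        then show ?thesis by blast
      qed
      then obtain y where "(gxc S, y) \<in> P" by blast
      moreover have "(gxc S, y) \<in> S" using line_iff[OF True] by simp
      ultimately show ?thesis by blast
    next
      case False
      then have "S \<in> R" using S by blast
      then obtain e where e: "e \<in> SE" "S = lray e \<or> S = rray e" using ray_seg by blast
      have "\<exists>q\<in>P. q \<in> S"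
      proof (cases "e \<in> snd ` N")
        case True
        then obtain p where p: "p \<in> N" "e = snd p" by blast
        let ?q = "(gxc (fst p), ght e)"
        have "?q \<in> P" unfolding P_def P1_def using p by blast
        moreover have "?q \<in> lray e" "?q \<in> rray e" using v(2) p unfolding lray_iff rray_iff by auto
        ultimately show ?thesis using e(2) by blast
      next
        case nN: False
        show ?thesis
        proof (cases "e \<in> Es")
          case True
          have "(gxc (uf e), ght e) \<in> P" "(gxc (vf e), ght e) \<in> P"
            unfolding P_def P2_def P3_def using True by blast+
          moreover have "(gxc (uf e), ght e) \<in> lray e" "(gxc (vf e), ght e) \<in> rray e"
            using v(14) True unfolding lray_iff rray_iff by auto
          ultimately show ?thesis using e(2) by blast
        next
          case False
          then have "e \<in> SE - UE" using nN e(1) unfolding UE_def by blast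
          then have "(glo e, ght e) \<in> P" unfolding P_def P5_def by blast
          moreover have "glo e \<le> ghi e" using seg_char(3)[OF e(1)] .
          then have "(glo e, ght e) \<in> lray e" "(glo e, ght e) \<in> rray e" unfolding lray_iff rray_iff by auto
          ultimately show ?thesis using e(2) by blast
        qed
      qed
      then show ?thesis by blast
    qed
  qed
  have "\<forall>p\<in>N. (gxc (fst p), ght (snd p)) \<in> P" unfolding P_def P1_def by blast
  then show ?thesis using hit finP cardP unfolding hitting_set_def by blast
qed


lemma lower:
  assumes H: "hitting_set (L \<union> R) P"
  shows "\<exists>N Es uf vf. C.valid N Es uf vf \<and> card L + card SE \<le> card P + card N + card Es"
proof -
  have finP: "finite P" using H unfolding hitting_set_def by blast
  have hitS: "\<And>S. S \<in> L \<union> R \<Longrightarrow> S \<inter> P \<noteq> {}" using H unfolding hitting_set_def by blast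
  define pk where "pk l = (SOME p. p \<in> P \<and> p \<in> l)" for l
  have pk: "pk l \<in> P \<and> pk l \<in> l" if "l \<in> L" for l
  proof -
    have "\<exists>p. p \<in> P \<and> p \<in> l" using hitS[of l] that by blast
    then show ?thesis unfolding pk_def by (rule someI_ex)
  qed
  have pix: "fst (pk l) = gxc l" if "l \<in> L" for l using pk[OF that] line_iff[OF that] by blast
  have piinj: "inj_on pk L"
  proof (rule inj_onI)
    fix l l' assume "l \<in> L" "l' \<in> L" "pk l = pk l'"
    then have "gxc l = gxc l'" using pix by metis
    then show "l = l'" using line_inj \<open>l \<in> L\<close> \<open>l' \<in> L\<close> by blast
  qed
  have hts: "snd p = ght e" if "e \<in> SE" "p \<in> e \<or> p \<in> lray e \<or> p \<in> rray e" for p e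
    using that seg_iff lray_snd rray_snd by blast
  have same: "e = e'" if "e \<in> SE" "e' \<in> SE" "snd p = ght e" "snd p = ght e'" for p e e'
    using that seg_unique by metis
  have lrin: "p \<in> e" if "e \<in> SE" "p \<in> lray e" "p \<in> rray e" for p e
    using that seg_iff[OF that(1)] lray_iff rray_iff by blast
  define Ein where "Ein = {e \<in> SE. \<exists>l\<in>L. pk l \<in> e}"
  define lE where "lE e = (SOME l. l \<in> L \<and> pk l \<in> e)" for e
  have lE: "lE e \<in> L \<and> pk (lE e) \<in> e" if "e \<in> Ein" for e
  proof -
    have "\<exists>l. l \<in> L \<and> pk l \<in> e" using that unfolding Ein_def by blast
    then show ?thesis unfolding lE_def by (rule someI_ex)
  qed
  define N where "N = (\<lambda>e. (lE e, e)) ` Ein"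
  define Elr where "Elr = {e \<in> SE - Ein. (\<exists>u\<in>L. pk u \<in> lray e) \<and> (\<exists>v\<in>L. pk v \<in> rray e)}"
  define uf where "uf e = (SOME u. u \<in> L \<and> pk u \<in> lray e)" for e
  define vf where "vf e = (SOME v. v \<in> L \<and> pk v \<in> rray e)" for e
  have uf: "uf e \<in> L \<and> pk (uf e) \<in> lray e" if "e \<in> Elr" for e
  proof -
    have "\<exists>u. u \<in> L \<and> pk u \<in> lray e" using that unfolding Elr_def by blast
    then show ?thesis unfolding uf_def by (rule someI_ex)
  qed
  have vf: "vf e \<in> L \<and> pk (vf e) \<in> rray e" if "e \<in> Elr" for e
  proof -
    have "\<exists>u. u \<in> L \<and> pk u \<in> rray e" using that unfolding Elr_def by blast
    then show ?thesis unfolding vf_def by (rule someI_ex)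
  qed
  have EinSE: "Ein \<subseteq> SE" and ElrSE: "Elr \<subseteq> SE" and dis: "Ein \<inter> Elr = {}"
    unfolding Ein_def Elr_def by auto
  have mN: "C.matching N"
    unfolding matching_iff[symmetric] is_matching_def
  proof (intro conjI)
    show "N \<subseteq> L \<times> SE" unfolding N_def using lE EinSE by auto
    show "\<forall>(l, e)\<in>N. l \<inter> e \<noteq> {}" unfolding N_def using lE pk by fastforce
    show "inj_on snd N" unfolding N_def by (auto simp: inj_on_def)
    show "inj_on fst N"
    proof (rule inj_onI)
      fix a b assume "a \<in> N" "b \<in> N" "fst a = fst b"
      then obtain e e' where ab: "a = (lE e, e)" "b = (lE e', e')" "e \<in> Ein" "e' \<in> Ein" "lE e = lE e'"
        unfolding N_def by auto
      have "pk (lE e) \<in> e" "pk (lE e) \<in> e'" using lE ab by metis+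
      then have "e = e'" using same[of e e' "pk (lE e)"] hts ab(3,4) EinSE by blast
      then show "a = b" using ab by simp
    qed
  qed
  have V: "C.valid N Elr uf vf"
    unfolding C.valid_def
  proof (intro conjI)
    show "C.matching N" by (rule mN)
    show "Elr \<subseteq> SE" by (rule ElrSE)
    show "uf ` Elr \<subseteq> L" "vf ` Elr \<subseteq> L" using uf vf by auto
    show "inj_on uf Elr"
    proof (rule inj_onI)
      fix e e' assume "e \<in> Elr" "e' \<in> Elr" "uf e = uf e'"
      then have "pk (uf e) \<in> lray e" "pk (uf e) \<in> lray e'" using uf by metis+
      then show "e = e'" using same hts \<open>e \<in> Elr\<close> \<open>e' \<in> Elr\<close> ElrSE by blast
    qed
    show "inj_on vf Elr"
    proof (rule inj_onI)
      fix e e' assume "e \<in> Elr" "e' \<in> Elr" "vf e = vf e'"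
      then have "pk (vf e) \<in> rray e" "pk (vf e) \<in> rray e'" using vf by metis+
      then show "e = e'" using same hts \<open>e \<in> Elr\<close> \<open>e' \<in> Elr\<close> ElrSE by blast
    qed
    show "uf ` Elr \<inter> vf ` Elr = {}"
    proof (rule ccontr)
      assume "uf ` Elr \<inter> vf ` Elr \<noteq> {}"
      then obtain e e' where ee: "e \<in> Elr" "e' \<in> Elr" "uf e = vf e'" by blast
      then have "pk (uf e) \<in> lray e" "pk (uf e) \<in> rray e'" using uf vf by metis+
      moreover have "e = e'" using calculation same hts ee(1,2) ElrSE by blast
      ultimately have "pk (uf e) \<in> e" using lrin ee(1) ElrSE by blast
      then have "e \<in> Ein" using uf[OF ee(1)] ee(1) ElrSE unfolding Ein_def by blast
      then show False using ee(1) dis by blast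
    qed
    show "fst ` N \<inter> uf ` Elr = {}"
    proof (rule ccontr)
      assume "fst ` N \<inter> uf ` Elr \<noteq> {}"
      then obtain e e' where ee: "e \<in> Ein" "e' \<in> Elr" "lE e = uf e'" unfolding N_def by force
      then have "pk (lE e) \<in> e" "pk (lE e) \<in> lray e'" using lE uf by metis+
      then have "e = e'" using same hts ee(1,2) ElrSE EinSE by blast
      then show False using ee dis by blast
    qed
    show "fst ` N \<inter> vf ` Elr = {}"
    proof (rule ccontr)
      assume "fst ` N \<inter> vf ` Elr \<noteq> {}"
      then obtain e e' where ee: "e \<in> Ein" "e' \<in> Elr" "lE e = vf e'" unfolding N_def by force
      then have "pk (lE e) \<in> e" "pk (lE e) \<in> rray e'" using lE vf by metis+
      then have "e = e'" using same hts ee(1,2) ElrSE EinSE by blast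
      then show False using ee dis by blast
    qed
    show "snd ` N \<inter> Elr = {}" unfolding N_def using dis by force
    show "\<forall>e\<in>Elr. gxc (uf e) \<le> ghi e \<and> glo e \<le> gxc (vf e)"
    proof
      fix e assume e: "e \<in> Elr"
      have "fst (pk (uf e)) \<le> ghi e" "glo e \<le> fst (pk (vf e))" using uf[OF e] vf[OF e] lray_iff rray_iff by blast+
      then show "gxc (uf e) \<le> ghi e \<and> glo e \<le> gxc (vf e)" using pix uf[OF e] vf[OF e] by metis
    qed
  qed
  define Erest where "Erest = SE - (Ein \<union> Elr)"
  have qex: "\<exists>p. p \<in> P \<and> p \<notin> pk ` L \<and> snd p = ght e" if e: "e \<in> Erest" for e
  proof (rule ccontr)
    assume nq: "\<not> ?thesis"
    have eSE: "e \<in> SE" using e unfolding Erest_def by blast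
    have "lray e \<in> R" "rray e \<in> R" using seg_char(1,2)[OF eSE] by blast+
    then obtain p1 p2 where p: "p1 \<in> P" "p1 \<in> lray e" "p2 \<in> P" "p2 \<in> rray e"
      using hitS by blast
    have "snd p1 = ght e" "snd p2 = ght e" using p lray_snd rray_snd by blast+
    then have "p1 \<in> pk ` L" "p2 \<in> pk ` L" using nq p by blast+
    then obtain u v where "u \<in> L" "v \<in> L" "p1 = pk u" "p2 = pk v" by blast
    then have "e \<in> Ein \<or> e \<in> Elr" using p eSE unfolding Elr_def by blast
    then show False using e unfolding Erest_def by blast
  qed
  define qf where "qf e = (SOME p. p \<in> P \<and> p \<notin> pk ` L \<and> snd p = ght e)" for e
  have qf: "qf e \<in> P \<and> qf e \<notin> pk ` L \<and> snd (qf e) = ght e" if "e \<in> Erest" for e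
    unfolding qf_def using qex[OF that] by (rule someI_ex)
  have ErSE: "Erest \<subseteq> SE" unfolding Erest_def by blast
  have qinj: "inj_on qf Erest"
  proof (rule inj_onI)
    fix e e' assume "e \<in> Erest" "e' \<in> Erest" "qf e = qf e'"
    then show "e = e'" using qf same ErSE by (metis subsetD)
  qed
  have finSEs: "finite Ein" "finite Elr" "finite Erest" using EinSE ElrSE ErSE finSE finite_subset by blast+
  have "card (pk ` L \<union> qf ` Erest) \<le> card P"
    by (rule card_mono[OF finP]) (use pk qf in auto)
  moreover have "card (pk ` L \<union> qf ` Erest) = card (pk ` L) + card (qf ` Erest)"
  proof -
    have "pk ` L \<inter> qf ` Erest = {}"
    proof (rule ccontr)
      assume "pk ` L \<inter> qf ` Erest \<noteq> {}"
      then obtain x e where xe: "x \<in> L" "e \<in> Erest" "pk x = qf e" by blast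
      have "qf e \<notin> pk ` L" using qf[OF xe(2)] by blast
      then show False using xe by (metis image_eqI)
    qed
    then show ?thesis by (intro card_Un_disjoint) (use finL finSEs in auto)
  qed
  moreover have "card (pk ` L) = card L" using piinj by (simp add: card_image)
  moreover have "card (qf ` Erest) = card Erest" using qinj by (simp add: card_image)
  moreover have "card Erest + card (Ein \<union> Elr) = card SE"
    using card_Diff_subset[of "Ein \<union> Elr" SE] card_mono[OF finSE, of "Ein \<union> Elr"] finSEs EinSE ElrSE
    unfolding Erest_def by auto
  moreover have "card (Ein \<union> Elr) = card Ein + card Elr"
    by (rule card_Un_disjoint) (use finSEs dis in auto)
  moreover have "card N = card Ein" unfolding N_def by (rule card_image) (auto simp: inj_on_def)
  ultimately have "card L + card SE \<le> card P + card N + card Elr" by linarith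
  then show ?thesis using V by blast
qed

end

theorem mainTheorem7:
  fixes L R :: "(real \<times> real) set set"
  assumes "finite L" and "\<forall>l\<in>L. vertical_line l"
    and "finite R" and "paired_rays R"
  shows "\<exists>P. min_hitting_set (L \<union> R) P \<and>
           (\<exists>p l e. (\<forall>i < max_matching_size L (segments R).
                        p i \<in> P \<and> l i \<in> L \<and> e i \<in> segments R \<and> p i \<in> l i \<inter> e i) \<and>
                    inj_on p {..< max_matching_size L (segments R)} \<and>
                    inj_on l {..< max_matching_size L (segments R)} \<and>
                    inj_on e {..< max_matching_size L (segments R)})"
proof -
  interpret plane L R using assms by unfold_locales
  define m where "m = max_matching_size L (segments R)"
  have fin: "finite {M. is_matching L SE M}"
  proof (rule finite_subset)
    show "{M. is_matching L SE M} \<subseteq> Pow (L \<times> SE)" unfolding is_matching_def by auto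
    show "finite (Pow (L \<times> SE))" using finL finSE by simp
  qed
  have ne: "{} \<in> {M. is_matching L SE M}" by (simp add: is_matching_def)
  have "m \<in> card ` {M. is_matching L SE M}"
    unfolding m_def max_matching_size_def by (rule Max_in) (use fin ne in auto)
  then obtain Mx where Mx: "is_matching L SE Mx" "card Mx = m" by auto
  have mMx: "C.matching Mx" using Mx(1) matching_iff by blast
  have v0: "C.valid {} {} id id" unfolding C.valid_def C.matching_def by simp
  obtain H0 where H0: "hitting_set (L \<union> R) H0" using realize[OF v0] by blast
  define n0 where "n0 = (LEAST n. \<exists>P. hitting_set (L \<union> R) P \<and> card P = n)"
  have "\<exists>P. hitting_set (L \<union> R) P \<and> card P = n0"
    unfolding n0_def by (rule LeastI_ex) (use H0 in blast)
  then obtain P0 where P0: "hitting_set (L \<union> R) P0" "card P0 = n0" by blast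
  have P0min: "card P0 \<le> card Q" if "hitting_set (L \<union> R) Q" for Q
    unfolding P0(2) n0_def by (rule Least_le) (use that in blast)
  obtain N0 Es0 uf0 vf0 where A: "C.valid N0 Es0 uf0 vf0" "card L + card SE \<le> card P0 + card N0 + card Es0"
    using lower[OF P0(1)] by blast
  obtain N Es uf vf where B: "C.valid N Es uf vf" "card Mx \<le> card N" "card N0 + card Es0 \<le> card N + card Es"
    using C.exchange_iter[OF A(1) mMx] by blast
  obtain P where PP: "hitting_set (L \<union> R) P" "card P + card N + card Es \<le> card L + card SE"
      "\<forall>q\<in>N. (gxc (fst q), ght (snd q)) \<in> P"
    using realize[OF B(1)] by blast
  have "card P \<le> card P0" using A(2) B(3) PP(2) by linarith
  then have minP: "min_hitting_set (L \<union> R) P"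
    unfolding min_hitting_set_def using PP(1) P0min by (meson le_trans)
  note v = valid_parts[OF B(1)]
  have finN: "finite N" using v(1) finL finSE by (meson finite_SigmaI finite_subset)
  have "m \<le> card N" using B(2) Mx(2) by simp
  then obtain N1 where N1: "N1 \<subseteq> N" "card N1 = m" "finite N1" by (rule obtain_subset_with_card_n)
  obtain h where h: "bij_betw h {0..<card N1} N1" using ex_bij_betw_nat_finite[OF N1(3)] by blast
  have hN: "h i \<in> N" if "i < m" for i using h N1 that unfolding bij_betw_def by auto
  have hinj: "inj_on h {..<m}" using h N1(2) unfolding bij_betw_def by (simp add: lessThan_atLeast0)
  define l where "l i = fst (h i)" for i
  define e where "e i = snd (h i)" for i
  define p where "p i = (gxc (l i), ght (e i))" for i
  have lL: "l i \<in> L" and eE: "e i \<in> SE" if "i < m" for i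
    using hN[OF that] v(1) unfolding l_def e_def by auto
  have edge: "glo (e i) \<le> gxc (l i) \<and> gxc (l i) \<le> ghi (e i)" if "i < m" for i
    using hN[OF that] v(2) unfolding l_def e_def by blast
  have mem: "p i \<in> P \<and> l i \<in> L \<and> e i \<in> segments R \<and> p i \<in> l i \<inter> e i" if "i < m" for i
  proof -
    have "p i \<in> P" using PP(3) hN[OF that] unfolding p_def l_def e_def by blast
    moreover have "p i \<in> l i" using line_iff[OF lL[OF that]] unfolding p_def by simp
    moreover have "p i \<in> e i" using seg_iff[OF eE[OF that]] edge[OF that] unfolding p_def by simp
    ultimately show ?thesis using lL[OF that] eE[OF that] by blast
  qed
  have linj: "inj_on l {..<m}"
  proof (rule inj_onI)
    fix i j assume ij: "i \<in> {..<m}" "j \<in> {..<m}" "l i = l j"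
    then have "h i = h j" using v(3) hN unfolding l_def inj_on_def by blast
    then show "i = j" using hinj ij(1,2) unfolding inj_on_def by blast
  qed
  have einj: "inj_on e {..<m}"
  proof (rule inj_onI)
    fix i j assume ij: "i \<in> {..<m}" "j \<in> {..<m}" "e i = e j"
    then have "h i = h j" using v(4) hN unfolding e_def inj_on_def by blast
    then show "i = j" using hinj ij(1,2) unfolding inj_on_def by blast
  qed
  have pinj: "inj_on p {..<m}"
  proof (rule inj_onI)
    fix i j assume ij: "i \<in> {..<m}" "j \<in> {..<m}" "p i = p j"
    then have "gxc (l i) = gxc (l j)" unfolding p_def by simp
    then have "l i = l j" using line_inj lL ij(1,2) by simp
    then show "i = j" using linj ij(1,2) unfolding inj_on_def by blast
  qed
  show ?thesis unfolding m_def[symmetric] using minP mem pinj linj einj by blast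
qed

end
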